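(* Let $\mathbf b=b_0b_1b_2\cdots\in\{1,-1\}^{\mathbb N}$. For each $t\ge2$ and $1\le u<t$, the vector \[V:=\sum_{p=0}^{2^{t-u}-1}\Delta(\ell_{t-1}+2^u p,\;2^u,\;2^{t-u})\] is a constant vector (all its $2^{t-u}$ entries are equal).
   Context: For integers $a$ and $N\ge1$, $(a \bmod N)$ denotes the unique integer in $\{0,\dots,N-1\}$ congruent to $a$ modulo $N$; we write $a\succ c \pmod N$ iff $(a\bmod N)>(c\bmod N)$. For $b\in\{-1,1\}$, $k\ge0$ and integers $0\le\ell\le n$, let $\varepsilon_{k,b}(\ell,n)=1$ if $n-\ell \succ (2+b)\cdot 2^k-(\ell+1) \pmod{2^{k+2}}$ and $\varepsilon_{k,b}(\ell,n)=0$ otherwise. For $s\ge0$, $d,m\ge1$, $\mathcal E_{k,b}(s,d,m)=\big(\varepsilon_{k,b}(s+jd,s+(j+1)d)\big)_{j=0}^{m-1}$ and $\Delta(s,d,m)=\sum_{k=0}^\infty\mathcal E_{k,b_k}(s,d,m)$. For $x_0,x_1,x_2,x_3\in\{1,-1\}$, $\ell(x_0,x_1,x_2,x_3)$ is given by the table (listing $(x_0,x_1,x_2,x_3)\mapsto \ell$): $(1,1,1,1)\mapsto7$, $(-1,1,1,1)\mapsto1$, $(1,-1,1,1)\mapsto3$, $(-1,-1,1,1)\mapsto5$, $(1,1,-1,1)\mapsto7$, $(-1,1,-1,1)\mapsto9$, $(1,-1,-1,1)\mapsto11$, $(-1,-1,-1,1)\mapsto5$, $(1,1,1,-1)\mapsto23$,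 $(-1,1,1,-1)\mapsto1$, $(1,-1,1,-1)\mapsto3$, $(-1,-1,1,-1)\mapsto21$, $(1,1,-1,-1)\mapsto23$, $(-1,1,-1,-1)\mapsto9$, $(1,-1,-1,-1)\mapsto11$, $(-1,-1,-1,-1)\mapsto21$. For $t\ge0$, $\ell_t:=2^t\,\ell(b_t,b_{t+1},b_{t+2},b_{t+3})$. *)

theory Defs
  imports Complex_Main
begin

definition eps :: "nat \<Rightarrow> int \<Rightarrow> int \<Rightarrow> int \<Rightarrow> int" where
  "eps k b l n = (if (n - l) mod 2^(k+2) > ((2 + b) * 2^k - (l + 1)) mod 2^(k+2) then 1 else 0)"

text \<open>Vectors of length m are represented as functions on indices j < m.
  E_{k,b}(s,d,m), entry j.\<close>
definition Evec :: "nat \<Rightarrow> int \<Rightarrow> nat \<Rightarrow> nat \<Rightarrow> nat \<Rightarrow> int" where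
  "Evec k b s d j = eps k b (int s + int j * int d) (int s + (int j + 1) * int d)"

definition Delta :: "(nat \<Rightarrow> int) \<Rightarrow> nat \<Rightarrow> nat \<Rightarrow> nat \<Rightarrow> real" where
  "Delta b s d j = (\<Sum>k. real_of_int (Evec k (b k) s d j))"

definition ltab :: "int \<Rightarrow> int \<Rightarrow> int \<Rightarrow> int \<Rightarrow> nat" where
  "ltab x0 x1 x2 x3 =
    (if x3 = 1 then
       (if x2 = 1 then
          (if x1 = 1 then (if x0 = 1 then 7 else 1) else (if x0 = 1 then 3 else 5))
        else
          (if x1 = 1 then (if x0 = 1 then 7 else 9) else (if x0 = 1 then 11 else 5)))
     else
       (if x2 = 1 then
          (if x1 = 1 then (if x0 = 1 then 23 else 1) else (if x0 = 1 then 3 else 21))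
        else
          (if x1 = 1 then (if x0 = 1 then 23 else 9) else (if x0 = 1 then 11 else 21))))"

definition ellt :: "(nat \<Rightarrow> int) \<Rightarrow> nat \<Rightarrow> nat" where
  "ellt b t = 2^t * ltab (b t) (b (t+1)) (b (t+2)) (b (t+3))"

end

theory Submission
  imports Defs
begin

lemma eps_period:
  assumes "k + 2 \<le> t"
  shows "eps k \<beta> (l + 2^t) (n + 2^t) = eps k \<beta> l n"
proof -
  have tt: "t = (k+2) + (t-k-2)" using assms by simp
  have t: "(2::int)^t = 2^(k+2) * 2^(t-k-2)" by (subst tt, subst power_add) simp
  have "((2 + \<beta>) * 2^k - (l + 2^t + 1)) mod 2^(k+2)
      = ((2 + \<beta>) * 2^k - (l + 1) + (-(2^(t-k-2))) * 2^(k+2)) mod 2^(k+2)"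
    by (simp add: t algebra_simps)
  also have "\<dots> = ((2 + \<beta>) * 2^k - (l + 1)) mod 2^(k+2)" by (rule mod_mult_self1)
  finally show ?thesis unfolding eps_def by (simp add: algebra_simps)
qed

lemma eps_zero:
  assumes "0 \<le> l" "0 \<le> d" "l + d < 2^k" "\<beta> = 1 \<or> \<beta> = -1"
  shows "eps k \<beta> l (l+d) = 0"
proof -
  have P: "(2::int)^(k+2) = 4 * 2^k" by simp
  have d: "d mod 2^(k+2) = d" using assms by (intro mod_pos_pos_trivial) (auto simp: P)
  have "((2+\<beta>)*2^k - (l+1)) mod 2^(k+2) = (2+\<beta>)*2^k - (l+1)"
    using assms by (intro mod_pos_pos_trivial) (auto simp: P)
  then show ?thesis unfolding eps_def using assms d by auto
qed

lemma eps_char: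
  assumes "0 < d" "d < 2^(k+2)"
  shows "eps k \<beta> l (l+d) = (if \<exists>x. l < x \<and> x \<le> l + d \<and> x mod 2^(k+2) = ((2+\<beta>)*2^k) mod 2^(k+2) then 1 else 0)"
proof -
  define P :: int where "P = 2^(k+2)"
  define c where "c = (2+\<beta>)*2^k"
  have Pp: "P > 0" by (simp add: P_def)
  have dm: "d mod P = d" using assms by (intro mod_pos_pos_trivial) (auto simp: P_def)
  have "(d > (c - (l+1)) mod P) \<longleftrightarrow> (\<exists>x. l < x \<and> x \<le> l + d \<and> x mod P = c mod P)"
  proof
    assume h: "d > (c - (l+1)) mod P"
    let ?x = "l + 1 + (c - (l+1)) mod P"
    have "0 \<le> (c - (l+1)) mod P" using Pp by simp
    then have "l < ?x" by simp
    moreover have "?x mod P = c mod P" by (simp add: mod_add_right_eq)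
    moreover have "?x \<le> l + d" using h by simp
    ultimately show "\<exists>x. l < x \<and> x \<le> l + d \<and> x mod P = c mod P" by blast
  next
    assume "\<exists>x. l < x \<and> x \<le> l + d \<and> x mod P = c mod P"
    then obtain x where x: "l < x" "x \<le> l + d" "x mod P = c mod P" by blast
    have "(c - (l+1)) mod P = (x - (l+1)) mod P" by (rule mod_diff_cong) (use x in auto)
    also have "\<dots> = x - (l+1)" using x assms by (intro mod_pos_pos_trivial) (auto simp: P_def)
    finally show "d > (c - (l+1)) mod P" using x by simp
  qed
  then show ?thesis unfolding eps_def P_def c_def using dm by (auto simp: P_def)
qed


lemma eps_high:
  fixes l D L0 a :: int
  assumes "t - 1 \<le> k" "1 \<le> t" "0 < D" "D < 2^(k+2)" "L0 = 2^(t-1) * a" "L0 \<le> l" "l + D < L0 + 2^t"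
  shows "eps k \<beta> l (l+D) = (if l < L0 + 2^(t-1) \<and> L0 + 2^(t-1) \<le> l + D \<and> (L0 + 2^(t-1)) mod 2^(k+2) = ((2+\<beta>)*2^k) mod 2^(k+2) then 1 else 0)"
proof -
  let ?P = "(2::int)^(k+2)"
  let ?c = "(2+\<beta>)*2^k"
  let ?x0 = "L0 + 2^(t-1)"
  have ex: "(\<exists>x. l < x \<and> x \<le> l + D \<and> x mod ?P = ?c mod ?P) \<longleftrightarrow> (l < ?x0 \<and> ?x0 \<le> l + D \<and> ?x0 mod ?P = ?c mod ?P)"
  proof
    assume "\<exists>x. l < x \<and> x \<le> l + D \<and> x mod ?P = ?c mod ?P"
    then obtain x where x: "l < x" "x \<le> l + D" "x mod ?P = ?c mod ?P" by blast
    have dP: "(2::int)^(t-1) dvd ?P" by (rule le_imp_power_dvd) (use assms in simp)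
    have dk: "(2::int)^(t-1) dvd 2^k" by (rule le_imp_power_dvd) (use assms in simp)
    have dc: "(2::int)^(t-1) dvd ?c" using dk by simp
    have "x mod 2^(t-1) = (x mod ?P) mod 2^(t-1)" using mod_mod_cancel[OF dP] by simp
    also have "\<dots> = (?c mod ?P) mod 2^(t-1)" using x by simp
    also have "\<dots> = ?c mod 2^(t-1)" by (rule mod_mod_cancel[OF dP])
    also have "\<dots> = 0" using dc by (rule dvd_imp_mod_0)
    finally obtain m where m: "x = 2^(t-1) * m" by (metis dvd_eq_mod_eq_0 dvdE)
    have tt: "(2::int)^t = 2 * 2^(t-1)" using assms by (cases t) auto
    have e2: "(2::int)^(t-1) * (a+2) = L0 + 2^t" using tt assms(5) by (simp add: algebra_simps)
    have "2^(t-1) * a < 2^(t-1) * m" using x(1) m assms(5,6) by linarith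
    hence am: "a < m" by (simp add: mult_less_cancel_left_pos)
    have "2^(t-1) * m < 2^(t-1) * (a+2)" unfolding e2 using x(2) m assms(7) by linarith
    hence "m < a + 2" by (simp add: mult_less_cancel_left_pos)
    hence "m = a+1" using am by simp
    hence "x = ?x0" using m assms(5) by (simp add: algebra_simps)
    then show "l < ?x0 \<and> ?x0 \<le> l + D \<and> ?x0 mod ?P = ?c mod ?P" using x by simp
  next
    assume "l < ?x0 \<and> ?x0 \<le> l + D \<and> ?x0 mod ?P = ?c mod ?P"
    then show "\<exists>x. l < x \<and> x \<le> l + D \<and> x mod ?P = ?c mod ?P" by blast
  qed
  show ?thesis using eps_char[OF assms(3) assms(4), of \<beta> l] ex by presburger
qed

definition G :: "int \<Rightarrow> int \<Rightarrow> nat \<Rightarrow> int" where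
  "G a \<beta> i = (if a mod 2^(i+2) = ((2+\<beta>)*2^i) mod 2^(i+2) then 1 else 0)"

lemma sum5: "(\<Sum>i<(5::nat). g i) = g 0 + g 1 + g 2 + g 3 + (g 4 :: int)"
  by (simp add: eval_nat_numeral)

lemma fin_check:
  assumes "\<forall>i. B i = 1 \<or> B i = -1"
  shows "(\<Sum>i<5. G (int (ltab (B 0) (B 1) (B 2) (B 3)) + 1) (B i) i)
       = (\<Sum>i<5. G (int (ltab (B 0) (B 1) (B 2) (B 3)) + 3) (B i) i)"
proof -
  have h0: "B 0 = 1 \<or> B 0 = -1" and h1: "B 1 = 1 \<or> B 1 = -1" and h2: "B 2 = 1 \<or> B 2 = -1"
    and h3: "B 3 = 1 \<or> B 3 = -1" and h4: "B 4 = 1 \<or> B 4 = -1" using assms by auto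
  show ?thesis unfolding sum5
    using h0 h1 h2 h3 h4 by (elim disjE) (simp_all add: G_def ltab_def)
qed


lemma scale:
  fixes a \<beta> :: int
  shows "((2::int)^s * a) mod 2^(i+s+2) = ((2+\<beta>)*2^(i+s)) mod 2^(i+s+2) \<longleftrightarrow> a mod 2^(i+2) = ((2+\<beta>)*2^i) mod 2^(i+2)"
proof -
  have e1: "(2::int)^(i+s+2) = 2^s * 2^(i+2)" by (simp add: power_add)
  have e2: "(2+\<beta>)*(2::int)^(i+s) = 2^s * ((2+\<beta>)*2^i)" by (simp add: power_add)
  show ?thesis unfolding e1 e2 mod_mult_mult1 by simp
qed

lemma G_big:
  assumes "0 < a" "a < 32" "5 \<le> i" "\<beta> = 1 \<or> \<beta> = -1"
  shows "G a \<beta> i = 0"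
proof -
  have "(2::int)^5 \<le> 2^i" using assms(3) by (rule power_increasing) simp
  then have p: "32 \<le> (2::int)^i" by simp
  have P: "(2::int)^(i+2) = 4 * 2^i" by simp
  have "a mod 2^(i+2) = a" using assms p by (intro mod_pos_pos_trivial) (auto simp: P)
  moreover have "((2+\<beta>)*2^i) mod 2^(i+2) = (2+\<beta>)*2^i"
    using assms p by (intro mod_pos_pos_trivial) (auto simp: P)
  moreover have "a < (2+\<beta>)*2^i" using assms p by auto
  ultimately show ?thesis unfolding G_def by auto
qed

lemma sum_split: "m \<le> (n::nat) \<Longrightarrow> (\<Sum>k<n. g k) = (\<Sum>k<m. g k) + (\<Sum>k=m..<n. (g k :: int))"
proof -
  assume "m \<le> n"
  then have "{..<n} = {..<m} \<union> {m..<n}" by auto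
  moreover have "{..<m} \<inter> {m..<n} = {}" by auto
  ultimately show ?thesis by (simp add: sum.union_disjoint)
qed

lemma crux:
  assumes b: "\<forall>k. b k = 1 \<or> b k = -1" and t: "2 \<le> t" and N: "t + 4 \<le> N"
  defines "la \<equiv> int (ltab (b (t-1)) (b t) (b (t+1)) (b (t+2)))"
  shows "(\<Sum>k=t-1..<N. (if (2^(t-1) * (la+1)) mod 2^(k+2) = ((2 + b k)*2^k) mod 2^(k+2) then 1 else 0 :: int))
       = (\<Sum>k=t-1..<N. (if (2^(t-1) * (la+3)) mod 2^(k+2) = ((2 + b k)*2^k) mod 2^(k+2) then 1 else 0 :: int))"
proof -
  define B where "B i = b (i + (t-1))" for i
  have Bb: "\<forall>i. B i = 1 \<or> B i = -1" using b by (simp add: B_def)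
  have la: "la = int (ltab (B 0) (B 1) (B 2) (B 3))"
  proof -
    have "1 + (t-1) = t" "2 + (t-1) = t+1" "3 + (t-1) = t+2" using t by auto
    then show ?thesis by (simp add: la_def B_def)
  qed
  have lab: "1 \<le> la \<and> la \<le> 23" unfolding la_def by (simp add: ltab_def)
  have gen: "(\<Sum>k=t-1..<N. (if (2^(t-1) * a) mod 2^(k+2) = ((2 + b k)*2^k) mod 2^(k+2) then 1 else 0 :: int))
      = (\<Sum>i<5. G a (B i) i)" if a: "0 < a" "a < 32" for a
  proof -
    have "{t-1..<N} = {0 + (t-1)..<(N-(t-1)) + (t-1)}" using N by auto
    then have "(\<Sum>k=t-1..<N. (if (2^(t-1) * a) mod 2^(k+2) = ((2 + b k)*2^k) mod 2^(k+2) then 1 else 0 :: int))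
       = (\<Sum>i=0..<N-(t-1). (if (2^(t-1) * a) mod 2^(i+(t-1)+2) = ((2 + b (i+(t-1)))*2^(i+(t-1))) mod 2^(i+(t-1)+2) then 1 else 0 :: int))"
      by (simp only: sum.shift_bounds_nat_ivl)
    also have "\<dots> = (\<Sum>i=0..<N-(t-1). G a (B i) i)"
      by (rule sum.cong) (simp_all only: scale G_def B_def)
    also have "\<dots> = (\<Sum>i<N-(t-1). G a (B i) i)" by (simp add: atLeast0LessThan)
    also have "\<dots> = (\<Sum>i<5. G a (B i) i) + (\<Sum>i=5..<N-(t-1). G a (B i) i)"
      by (rule sum_split) (use N t in arith)
    also have "(\<Sum>i=5..<N-(t-1). G a (B i) i) = 0"
      by (rule sum.neutral) (use a Bb G_big in auto)
    finally show ?thesis by simp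
  qed
  show ?thesis
    using gen[of "la+1"] gen[of "la+3"] lab fin_check[OF Bb] la by simp
qed


theorem lemma5p3:
  fixes b :: "nat \<Rightarrow> int" and t u :: nat
  assumes "\<forall>k. b k = 1 \<or> b k = -1"
    and "t \<ge> 2" and "1 \<le> u" and "u < t"
  shows "\<forall>j < 2^(t-u). \<forall>j' < 2^(t-u).
           (\<Sum>p<2^(t-u). Delta b (ellt b (t-1) + 2^u * p) (2^u) j)
         = (\<Sum>p<2^(t-u). Delta b (ellt b (t-1) + 2^u * p) (2^u) j')"
proof -
  define D :: nat where "D = 2^u"
  define M :: nat where "M = 2^(t-u)"
  define L :: nat where "L = ellt b (t-1)"
  define la :: int where "la = int (ltab (b (t-1)) (b t) (b (t+1)) (b (t+2)))"
  have tt: "t-1+1 = t" "t-1+2 = t+1" "t-1+3 = t+2" using assms by auto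
  have e: "ellt b (t-1) = 2^(t-1) * ltab (b (t-1)) (b t) (b (t+1)) (b (t+2))"
    unfolding ellt_def tt by (rule refl)
  have Lz: "int L = 2^(t-1) * la" unfolding L_def e la_def by simp
  have DM: "D * M = 2^t" using assms by (simp add: D_def M_def power_add[symmetric])
  have DMz: "int D * int M = 2^t" using DM by (metis of_nat_mult of_nat_numeral of_nat_power)
  have Dz: "int D = 2^u" by (simp add: D_def)
  have Dpos: "0 < D" by (simp add: D_def)
  have t2: "(2::int)^t = 2 * 2^(t-1)" using assms by (cases t) auto
  define N where "N = L + 2*M*D + D + t + 5"
  define f where "f q = (\<Sum>k<N. eps k (b k) (int L + int D * int q) (int L + int D * int q + int D))" for q :: nat

  have step1: "Delta b (L + D*p) D j = real_of_int (f (p+j))" if pj: "p < M" "j < M" for p j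
  proof -
    let ?l = "int L + int D * int (p+j)"
    have ev: "Evec k (b k) (L + D*p) D j = eps k (b k) ?l (?l + int D)" for k
      by (simp add: Evec_def algebra_simps)
    have bnd: "L + D*(p+j) + D < 2^k" if "N \<le> k" for k
    proof -
      have pj2: "p+j \<le> 2*M" using pj by simp
      have "D*(p+j) \<le> 2*M*D" using mult_le_mono2[OF pj2, of D] by (simp add: mult.commute)
      then have "L + D*(p+j) + D < N" unfolding N_def by linarith
      also have "N < 2^N" by (rule less_exp)
      also have "(2::nat)^N \<le> 2^k" using that by (simp add: power_increasing)
      finally show ?thesis .
    qed
    have z: "real_of_int (Evec k (b k) (L + D*p) D j) = 0" if "k \<notin> {..<N}" for k
    proof -
      have "int (L + D*(p+j) + D) < int (2^k)" using bnd[of k] that by (simp only: of_nat_less_iff) simp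
      then have "?l + int D < 2^k" by (simp add: algebra_simps)
      then show ?thesis unfolding ev using eps_zero[of ?l "int D" k "b k"] assms(1) by simp
    qed
    have "(\<lambda>k. real_of_int (Evec k (b k) (L + D*p) D j)) sums (\<Sum>k<N. real_of_int (Evec k (b k) (L + D*p) D j))"
      by (rule sums_finite) (use z in auto)
    then have "Delta b (L + D*p) D j = (\<Sum>k<N. real_of_int (Evec k (b k) (L + D*p) D j))"
      unfolding Delta_def by (rule sums_unique[symmetric])
    also have "\<dots> = real_of_int (f (p+j))" by (simp add: f_def ev)
    finally show ?thesis .
  qed

  have step2: "f (q + M) = f q" if qM: "q + 1 < M" for q
  proof -
    define l where "l = int L + int D * int q"
    have sh: "int L + int D * int (q+M) = l + 2^t"
      using DMz by (simp add: l_def algebra_simps)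
    have fq: "f q = (\<Sum>k<N. eps k (b k) l (l + int D))" by (simp add: f_def l_def)
    have fqM: "f (q+M) = (\<Sum>k<N. eps k (b k) (l + 2^t) (l + int D + 2^t))"
      by (simp only: f_def sh) (simp add: add_ac)
    have N1: "t - 1 \<le> N" "t + 4 \<le> N" by (simp_all add: N_def)
    have "D*q + D < D*M" using mult_strict_left_mono[OF qM Dpos] by simp
    then have "int (D*q + D) < int (2^t)" unfolding DM by (simp only: of_nat_less_iff)
    then have qb: "int D * int q + int D < 2^t" by simp
    have low: "(\<Sum>k<t-1. eps k (b k) (l + 2^t) (l + int D + 2^t)) = (\<Sum>k<t-1. eps k (b k) l (l + int D))"
      by (rule sum.cong[OF refl], rule eps_period) auto
    define \<chi> :: int where "\<chi> = (if l < int L + 2^(t-1) \<and> int L + 2^(t-1) \<le> l + int D then 1 else 0)"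
    define I1 :: "nat \<Rightarrow> int" where "I1 k = (if (2^(t-1) * (la+1)) mod 2^(k+2) = ((2 + b k)*2^k) mod 2^(k+2) then 1 else 0)" for k
    define I3 :: "nat \<Rightarrow> int" where "I3 k = (if (2^(t-1) * (la+3)) mod 2^(k+2) = ((2 + b k)*2^k) mod 2^(k+2) then 1 else 0)" for k
    have X: "int L + 2^(t-1) = 2^(t-1)*(la+1)" by (simp add: Lz algebra_simps)
    have Y: "int L + 2^t + 2^(t-1) = 2^(t-1)*(la+3)" by (simp add: Lz t2 algebra_simps)
    have L2: "int L + 2^t = 2^(t-1)*(la+2)" by (simp add: Lz t2 algebra_simps)
    have Dk: "int D < 2^(k+2)" if "t - 1 \<le> k" for k
    proof -
      have "(2::int)^u < 2^(k+2)" by (rule power_strict_increasing) (use that assms in auto)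
      then show ?thesis by (simp add: Dz)
    qed
    have hi1: "eps k (b k) l (l + int D) = \<chi> * I1 k" if "t - 1 \<le> k" for k
    proof -
      have E: "eps k (b k) l (l + int D) = (if l < int L + 2^(t-1) \<and> int L + 2^(t-1) \<le> l + int D \<and> (int L + 2^(t-1)) mod 2^(k+2) = ((2 + b k)*2^k) mod 2^(k+2) then 1 else 0)"
        by (rule eps_high[OF that _ _ Dk[OF that] Lz]) (use assms Dpos qb in \<open>auto simp: l_def\<close>)
      show ?thesis unfolding E \<chi>_def I1_def X[symmetric] by simp
    qed
    have hi3: "eps k (b k) (l + 2^t) (l + int D + 2^t) = \<chi> * I3 k" if "t - 1 \<le> k" for k
    proof -
      have E: "eps k (b k) (l + 2^t) (l + 2^t + int D) = (if l + 2^t < int L + 2^t + 2^(t-1) \<and> int L + 2^t + 2^(t-1) \<le> l + 2^t + int D \<and> (int L + 2^t + 2^(t-1)) mod 2^(k+2) = ((2 + b k)*2^k) mod 2^(k+2) then 1 else 0)"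
        by (rule eps_high[OF that _ _ Dk[OF that] L2]) (use assms Dpos qb in \<open>auto simp: l_def\<close>)
      have eq: "l + int D + 2^t = l + 2^t + int D" by simp
      show ?thesis unfolding eq E \<chi>_def I3_def Y[symmetric] by simp
    qed
    have cr: "(\<Sum>k=t-1..<N. I1 k) = (\<Sum>k=t-1..<N. I3 k)"
      unfolding I1_def I3_def la_def using crux[OF assms(1) assms(2) N1(2)] by simp
    have "f q = (\<Sum>k<t-1. eps k (b k) l (l + int D)) + (\<Sum>k=t-1..<N. \<chi> * I1 k)"
      unfolding fq using sum_split[OF N1(1)] hi1 by simp
    also have "\<dots> = (\<Sum>k<t-1. eps k (b k) l (l + int D)) + \<chi> * (\<Sum>k=t-1..<N. I1 k)"
      by (simp add: sum_distrib_left)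
    also have "\<dots> = (\<Sum>k<t-1. eps k (b k) (l + 2^t) (l + int D + 2^t)) + \<chi> * (\<Sum>k=t-1..<N. I3 k)"
      using low cr by simp
    also have "\<dots> = (\<Sum>k<t-1. eps k (b k) (l + 2^t) (l + int D + 2^t)) + (\<Sum>k=t-1..<N. \<chi> * I3 k)"
      by (simp add: sum_distrib_left)
    also have "\<dots> = f (q+M)"
      unfolding fqM using sum_split[OF N1(1)] hi3 by simp
    finally show ?thesis by simp
  qed

  have step3: "(\<Sum>p<M. f (p+j)) = (\<Sum>p<M. f p)" if "j < M" for j
    using that
  proof (induction j)
    case 0 then show ?case by simp
  next
    case (Suc j)
    then have IH: "(\<Sum>p<M. f (p+j)) = (\<Sum>p<M. f p)" by simp
    have "f j + (\<Sum>p<M. f (p + Suc j)) = (\<Sum>p<Suc M. f (p+j))"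
      by (subst sum.lessThan_Suc_shift) simp
    also have "\<dots> = (\<Sum>p<M. f (p+j)) + f (j + M)" by (simp add: add.commute)
    also have "f (j + M) = f j" using step2 Suc.prems by simp
    finally show ?case using IH by simp
  qed

  have key: "(\<Sum>p<M. Delta b (L + D*p) D j) = real_of_int (\<Sum>p<M. f p)" if "j < M" for j
  proof -
    have "(\<Sum>p<M. Delta b (L + D*p) D j) = (\<Sum>p<M. real_of_int (f (p+j)))"
      by (rule sum.cong) (use step1 that in auto)
    also have "\<dots> = real_of_int (\<Sum>p<M. f (p+j))" by simp
    finally show ?thesis using step3[OF that] by simp
  qed
  show ?thesis using key unfolding M_def D_def L_def by simp
qed

end
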